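(* Let $\varepsilon\in(0,1)$, $0<c_2<1$, and $C_0\ge1$. Let $P_n^*$ be an entire function and $W:\mathbb C\to(0,\infty)$ a continuous function (both allowed to depend on $n$) such that $C_0^{-1}\le W(a_nz)/W(a_nw)\le C_0$ whenever $w\in[-1+\varepsilon,1-\varepsilon]$ and $|z-w|\le2/n$; set $F_n(z)=P_n^*(z)W(a_nz)$. Suppose that for some $w\in[-1+\varepsilon,1-\varepsilon]$ we have $|F_n(w)|\ge\exp(-n^{c_2})$ and $|F_n(z)|\le\exp(n^{c_2})$ for all $z\in B(w,3/(2n))$. Then $$\int_{B(w,1/(2n))}\big|\log|F_n(z)|\big|^2\,dA(z)\le Cn^{-2+6c_2},$$ where $C$ depends only on $c_2$ and $C_0$ (for $n$ sufficiently large) and $dA$ is planar Lebesgue measure.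
   Context: $a_n>0$ is a positive scaling parameter (in the paper, the Mhaskar–Rakhmanov–Saff number); $B(w,r)$ is the open disc in $\mathbb C$ of radius $r$ centered at $w$. *)

theory Defs
  imports "HOL-Analysis.Analysis"
begin

end

theory Submission
  imports Defs "HOL-Complex_Analysis.Complex_Analysis"
begin


lemma emeasure_cball_complex: "r \<ge> 0 \<Longrightarrow> emeasure lborel (cball (c::complex) r) = ennreal (pi * r^2)"
  by (simp add: emeasure_cball unit_ball_vol_2)
lemma emeasure_ball_complex: "r \<ge> 0 \<Longrightarrow> emeasure lborel (ball (c::complex) r) = ennreal (pi * r^2)"
  by (simp add: emeasure_ball unit_ball_vol_2)

lemma ball_borel[measurable]: "ball (a::complex) r \<in> sets borel" by auto
lemma cball_borel[measurable]: "cball (a::complex) r \<in> sets borel" by auto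

lemma sum_odd_sq: "(\<Sum>k<Suc j. real (2*k+1)) = (real j + 1)^2"
  by (induction j) (auto simp: power2_eq_square algebra_simps)

lemma two_k_le: "real (2*k+1) \<le> 2 * 2^k"
proof (induction k)
  case (Suc k)
  have one: "(2::real)^k \<ge> 1" by simp
  have "real (2*Suc k+1) = real (2*k+1) + 2" by simp
  also have "\<dots> \<le> 2*2^k + 2*2^k" using Suc one by linarith
  also have "\<dots> = 2*2^Suc k" by simp
  finally show ?case .
qed simp

lemma pointwise_log:
  fixes a z :: complex and r :: real
  assumes r: "r > 0"
  shows "ennreal ((ln (cmod (z - a) / r))\<^sup>2) * indicator (ball a (2*r)) z
     \<le> indicator (ball a (2*r)) z + (\<Sum>k. ennreal (real (2*k+1)) * indicator (cball a (r / 2^k)) z)"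
proof (cases "z \<in> ball a (2*r) \<and> z \<noteq> a")
  case False
  then show ?thesis by auto
next
  case True
  define d where "d = cmod (z - a) / r"
  have d0: "d > 0" using True r by (simp add: d_def)
  have d2: "d < 2" using True r by (simp add: d_def dist_norm norm_minus_commute field_simps)
  show ?thesis
  proof (cases "d \<ge> 1")
    case True2: True
    have "ln d \<le> d - 1" using d0 by (rule ln_le_minus_one)
    moreover have "ln d \<ge> 0" using True2 by simp
    ultimately have "(ln d)^2 \<le> 1" using d2 by (intro power_le_one) auto 
    then have "ennreal ((ln d)\<^sup>2) * indicator (ball a (2*r)) z \<le> indicator (ball a (2*r)) z"
      using True by (simp add: ennreal_le_1)
    then show ?thesis unfolding d_def by (rule order_trans) (simp add: add_increasing2)
  next
    case False
    have "1 < 1/d" using False d0 by (simp add: field_simps)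
    have ex: "\<exists>n. 1/d < 2^n" by (rule real_arch_pow) simp
    define J where "J = (LEAST n. 1/d < (2::real)^n)"
    have J1: "1/d < 2^J" unfolding J_def by (rule LeastI_ex[OF ex])
    have "J \<noteq> 0" proof assume "J = 0" then show False using J1 \<open>1 < 1/d\<close> by simp qed
    then obtain j where Jj: "J = Suc j" by (cases J) auto
    have j1: "2^j \<le> 1/d" using not_less_Least[of j "\<lambda>n. 1/d < (2::real)^n"] Jj unfolding J_def by force
    have "ln (1/d) < ln (2^(Suc j))" using J1 Jj d0 by simp
    also have "\<dots> = (j+1) * ln 2" by (subst ln_realpow) auto
    also have "\<dots> \<le> j+1" using ln_2_less_1 by (simp add: mult_left_le) 
    finally have "- ln d < j+1" using d0 by (simp add: ln_div)
    moreover have "ln d < 0" using False d0 by simp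
    ultimately have "(ln d)^2 \<le> (real j + 1)^2"
      by (intro power2_le_iff_abs_le[THEN iffD2]) auto
    also have "\<dots> = (\<Sum>k<Suc j. real (2*k+1))" by (rule sum_odd_sq[symmetric])
    finally have A: "ennreal ((ln d)^2) \<le> (\<Sum>k<Suc j. ennreal (real (2*k+1)))"
      by (subst sum_ennreal) (auto intro: ennreal_leI)
    have "k < Suc j \<Longrightarrow> z \<in> cball a (r / 2^k)" for k
    proof -
      assume "k < Suc j"
      then have "(2::real)^k \<le> 2^j" by (intro power_increasing) auto
      then have "2^k \<le> 1/d" using j1 by linarith
      then have "d \<le> 1/2^k" using d0 by (simp add: field_simps)
      then show ?thesis using r by (simp add: d_def dist_norm norm_minus_commute field_simps)
    qed
    then have "(\<Sum>k<Suc j. ennreal (real (2*k+1))) = (\<Sum>k<Suc j. ennreal (real (2*k+1)) * indicator (cball a (r / 2^k)) z)"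
      by (intro sum.cong) auto
    also have "\<dots> \<le> (\<Sum>k. ennreal (real (2*k+1)) * indicator (cball a (r / 2^k)) z)"
      by (rule sum_le_suminf) auto
    finally have "ennreal ((ln d)^2) \<le> \<dots>" using A by (meson order_trans)
    then show ?thesis using True unfolding d_def by (simp add: add_increasing)
  qed
qed

lemma log_integral:
  fixes a :: complex and r :: real
  assumes r: "r > 0"
  shows "(\<integral>\<^sup>+ z. ennreal ((ln (cmod (z - a) / r))\<^sup>2) * indicator (ball a (2*r)) z \<partial>lborel)
          \<le> ennreal (8 * pi * r^2)"
proof -
  have "(\<integral>\<^sup>+ z. ennreal ((ln (cmod (z - a) / r))\<^sup>2) * indicator (ball a (2*r)) z \<partial>lborel)
     \<le> (\<integral>\<^sup>+ z. indicator (ball a (2*r)) z + (\<Sum>k. ennreal (real (2*k+1)) * indicator (cball a (r / 2^k)) z) \<partial>lborel)"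
    by (intro nn_integral_mono pointwise_log r)
  also have "\<dots> = (\<integral>\<^sup>+ z. indicator (ball a (2*r)) z \<partial>lborel) + (\<integral>\<^sup>+ z. (\<Sum>k. ennreal (real (2*k+1)) * indicator (cball a (r / 2^k)) z) \<partial>lborel)"
    by (rule nn_integral_add) measurable
  also have "(\<integral>\<^sup>+ z. (\<Sum>k. ennreal (real (2*k+1)) * indicator (cball a (r / 2^k)) z) \<partial>lborel)
       = (\<Sum>k. (\<integral>\<^sup>+ z. ennreal (real (2*k+1)) * indicator (cball a (r / 2^k)) z \<partial>lborel))"
    by (rule nn_integral_suminf) auto
  also have "\<dots> = (\<Sum>k. ennreal (real (2*k+1) * (pi * (r/2^k)^2)))"
    using r by (subst nn_integral_cmult_indicator) (auto simp: emeasure_cball_complex ennreal_mult)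
  also have "\<dots> \<le> (\<Sum>k. ennreal (2 * pi * r^2 * (1/2)^k))"
  proof (intro suminf_le ennreal_leI)
    fix k :: nat
    have "real (2*k+1) * (pi * (r/2^k)^2) = real (2*k+1) * (pi*r^2) / 4^k"
    proof -
      have "(2::real)^k * 2^k = 4^k" by (simp flip: power_mult_distrib)
      then show ?thesis by (simp add: power_divide power2_eq_square)
    qed
    also have "\<dots> \<le> (2 * 2^k) * (pi*r^2) / 4^k"
      by (intro divide_right_mono mult_right_mono two_k_le) auto
    also have "\<dots> = 2 * pi * r^2 * (1/2)^k"
      by (simp add: field_simps flip: power_mult_distrib)
    finally show "real (2*k+1) * (pi * (r/2^k)^2) \<le> 2 * pi * r^2 * (1/2)^k" .
  qed auto
  also have "\<dots> = ennreal (4 * pi * r^2)"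
  proof -
    have "(\<lambda>k. 2 * pi * r^2 * (1/2::real)^k) sums (2 * pi * r^2 * (1 / (1 - 1/2)))"
      by (intro sums_mult geometric_sums) auto
    then have "(\<lambda>k. 2 * pi * r^2 * (1/2::real)^k) sums (4 * pi * r^2)" by (simp add: mult.assoc)
    then show ?thesis by (subst suminf_ennreal_eq[where x="4*pi*r^2"]) auto
  qed
  also have "(\<integral>\<^sup>+ z. indicator (ball a (2*r)) z \<partial>lborel) = ennreal (4*pi*r^2)"
    using r by (simp add: emeasure_ball_complex power_mult_distrib)
  finally show ?thesis by (simp add: mult.assoc flip: ennreal_plus)
qed


definition blaschke :: "complex \<Rightarrow> real \<Rightarrow> complex \<Rightarrow> complex \<Rightarrow> complex" where
  "blaschke c \<rho> a z = of_real \<rho> * (z - a) / (of_real (\<rho>^2) - cnj (a - c) * (z - c))"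

lemma bl_identity:
  fixes a z :: complex and \<rho> :: real
  shows "(cmod (of_real (\<rho>^2) - cnj a * z))^2 - \<rho>^2 * (cmod (z - a))^2 = (\<rho>^2 - (cmod a)^2) * (\<rho>^2 - (cmod z)^2)"
  by (simp only: cmod_power2) (simp add: power2_eq_square algebra_simps)

lemma bl_den_nz:
  assumes r: "r > 0" and a: "cmod (a - c) \<le> r" and z: "cmod (z - c) < 3*r/2"
  shows "of_real ((5*r/4)^2) - cnj (a - c) * (z - c) \<noteq> 0"
proof
  assume "of_real ((5*r/4)^2) - cnj (a - c) * (z - c) = 0"
  then have "cmod (of_real ((5*r/4)^2)) = cmod (cnj (a - c) * (z - c))" by (simp add: eq_iff_diff_eq_0[symmetric])
  also have "\<dots> = cmod (a - c) * cmod (z - c)" by (simp add: norm_mult complex_mod_cnj del: complex_cnj_diff)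
  also have "\<dots> \<le> r * cmod (z - c)" using a by (intro mult_right_mono) auto
  also have "\<dots> \<le> r * (3*r/2)" using z r by (intro mult_left_mono) auto
  moreover have "cmod (of_real ((5*r/4)^2)) = (5*r/4)^2" by (simp only: norm_of_real abs_power2)
  ultimately show False using r by (simp add: power2_eq_square)
qed

lemma bl_sphere:
  assumes r: "r > 0" and a: "cmod (a - c) \<le> r" and z: "cmod (z - c) = 5*r/4"
  shows "cmod (blaschke c (5*r/4) a z) = 1"
proof -
  have den: "of_real ((5*r/4)^2) - cnj (a - c) * (z - c) \<noteq> 0"
    using bl_den_nz[OF r a] z r by simp
  have "(cmod (of_real ((5*r/4)^2) - cnj (a - c) * (z - c)))^2 = (5*r/4)^2 * (cmod ((z - c) - (a - c)))^2"
    using bl_identity[of "5*r/4" "a - c" "z - c"] z by simp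
  then have "cmod (of_real ((5*r/4)^2) - cnj (a - c) * (z - c)) = (5*r/4) * cmod (z - a)"
    using r by (simp add: power_mult_distrib[symmetric] power2_eq_iff_nonneg)
  moreover have "cmod (blaschke c (5*r/4) a z) = (5*r/4) * cmod (z - a) / cmod (of_real ((5*r/4)^2) - cnj (a - c) * (z - c))"
    unfolding blaschke_def norm_divide norm_mult norm_of_real using r by simp
  moreover have "z \<noteq> a" using a z r by auto
  ultimately show ?thesis using den r by (simp add: divide_simps)
qed

lemma bl_center:
  assumes r: "r > 0" and a: "cmod (a - c) \<le> r"
  shows "cmod (blaschke c (5*r/4) a c) \<le> 4/5"
proof -
  have *: "blaschke c \<rho> a c = (c - a) / of_real \<rho>" if "\<rho> > 0" for \<rho>
    using that unfolding blaschke_def by (simp add: power2_eq_square field_simps)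
  have e: "blaschke c (5*r/4) a c = (c - a) / of_real (5*r/4)" by (rule *) (use r in simp)
  have "cmod (blaschke c (5*r/4) a c) = cmod (c - a) / (5*r/4)"
    unfolding e norm_divide norm_of_real using r by simp
  also have "\<dots> \<le> r / (5*r/4)" using a r by (intro divide_right_mono) (auto simp: norm_minus_commute)
  also have "\<dots> = 4/5" using r by simp
  finally show ?thesis .
qed

lemma bl_log_bound:
  assumes r: "r > 0" and a: "cmod (a - c) \<le> r" and z: "cmod (z - c) < r/2"
  shows "(ln (cmod (blaschke c (5*r/4) a z)))^2 \<le> 2 * (ln (cmod (z - a) / r))^2 + 2"
proof (cases "z = a")
  case True then show ?thesis by (simp add: blaschke_def)
next
  case False
  define K where "K = (5*r/4)^2"
  define Q where "Q = cnj (a - c) * (z - c)"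
  have K: "cmod (of_real K) = K" "K = 25/16 * r^2" unfolding K_def by (simp only: norm_of_real abs_power2) (simp add: power2_eq_square)
  define D where "D = cmod (of_real K - Q)"
  have P: "cmod Q \<le> r * (r/2)"
    unfolding Q_def norm_mult complex_mod_cnj using a z r by (intro mult_mono) auto
  have "D \<le> K + r*(r/2)" unfolding D_def
    using norm_triangle_ineq4[of "of_real K" Q] P K(1) by linarith
  then have D1: "D \<le> 33/16 * r^2" using K by (simp add: power2_eq_square)
  have "D \<ge> K - r*(r/2)" unfolding D_def
    using norm_triangle_ineq2[of "of_real K" Q] P K(1) by linarith
  then have D2: "D \<ge> 17/16 * r^2" using K by (simp add: power2_eq_square)
  have "r^2 > 0" using r by simp
  then have Dpos: "D > 0" using D2 by linarith
  define t where "t = (5*r/4) * r / D"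
  have za: "cmod (z - a) > 0" using False by simp
  have B: "cmod (blaschke c (5*r/4) a z) = t * (cmod (z - a) / r)"
  proof -
    have e: "blaschke c (5*r/4) a z = of_real (5*r/4) * (z - a) / (of_real K - Q)"
      by (simp only: blaschke_def K_def Q_def)
    have "cmod (blaschke c (5*r/4) a z) = (5*r/4) * cmod (z - a) / D"
      unfolding e D_def norm_divide norm_mult norm_of_real using r by simp
    then show ?thesis unfolding t_def using r Dpos by (simp add: field_simps)
  qed
  have t1: "t \<le> 20/17" unfolding t_def using D2 r Dpos
    by (simp add: field_simps power2_eq_square)
  have t2: "t \<ge> 20/33" unfolding t_def using D1 r Dpos
    by (simp add: field_simps power2_eq_square)
  have tpos: "t > 0" using t2 by simp
  have "ln t \<le> t - 1" using tpos by (rule ln_le_minus_one)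
  moreover have "ln (1/t) \<le> 1/t - 1" using tpos by (intro ln_le_minus_one) auto
  moreover have "1/t \<le> 33/20" using t2 tpos by (simp add: field_simps)
  ultimately have lt: "\<bar>ln t\<bar> \<le> 1" using t1 tpos by (simp add: ln_div abs_le_iff)
  have e: "ln (cmod (blaschke c (5*r/4) a z)) = ln t + ln (cmod (z - a) / r)"
    unfolding B using tpos za r by (subst ln_mult) auto
  have q: "(ln t + ln (cmod (z - a) / r))^2 \<le> 2 * (ln t)^2 + 2 * (ln (cmod (z - a) / r))^2"
    using power2_sum[of "ln t" "ln (cmod (z - a) / r)"] power2_diff[of "ln t" "ln (cmod (z - a) / r)"]
      zero_le_power2[of "ln t - ln (cmod (z - a) / r)"] by linarith
  have "(ln t)^2 \<le> 1" using lt by (simp add: abs_square_le_1)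
  then show ?thesis unfolding e using q by linarith
qed


lemma bl_divide:
  assumes r: "r > 0" and hol: "h holomorphic_on ball c (3*r/2)"
    and bd: "\<And>z. z \<in> cball c (5*r/4) \<Longrightarrow> cmod (h z) \<le> 1"
    and a: "cmod (a - c) \<le> r" and ha: "h a = 0"
  obtains g where "g holomorphic_on ball c (3*r/2)" "\<And>z. z \<in> cball c (5*r/4) \<Longrightarrow> cmod (g z) \<le> 1"
    "\<And>z. z \<in> ball c (3*r/2) \<Longrightarrow> h z = g z * blaschke c (5*r/4) a z"
proof -
  define S where "S = ball c (3*r/2)"
  have aS: "a \<in> interior S" unfolding S_def using a r by (simp add: dist_norm norm_minus_commute)
  define q where "q = (\<lambda>z. if z = a then deriv h a else (h z - h a) / (z - a))"
  have qh: "q holomorphic_on S" unfolding q_def S_def by (rule pole_lemma[OF hol aS[unfolded S_def]])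
  define g where "g = (\<lambda>z. q z * (of_real ((5*r/4)^2) - cnj (a - c) * (z - c)) / of_real (5*r/4))"
  have gh: "g holomorphic_on S" unfolding g_def using r by (intro holomorphic_intros qh) auto
  have eq: "h z = g z * blaschke c (5*r/4) a z" if z: "z \<in> S" for z
  proof (cases "z = a")
    case True then show ?thesis using ha by (simp add: blaschke_def)
  next
    case False
    have den: "of_real ((5*r/4)^2) - cnj (a - c) * (z - c) \<noteq> 0"
      by (rule bl_den_nz[OF r a]) (use z in \<open>simp add: S_def dist_norm norm_minus_commute\<close>)
    have alg: "\<And>x D R. D \<noteq> 0 \<Longrightarrow> R \<noteq> 0 \<Longrightarrow> x = (x - 0) / (z - a) * D / R * (R * (z - a) / D)"
      using False by (simp add: field_simps)
    show ?thesis unfolding g_def q_def blaschke_def ha if_not_P[OF False]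
      by (rule alg[OF den]) (use r in simp)
  qed
  have gb: "cmod (g z) \<le> 1" if z: "z \<in> cball c (5*r/4)" for z
  proof (rule maximum_modulus_frontier[where S = "cball c (5*r/4)" and f = g])
    have sub: "cball c (5*r/4) \<subseteq> S" unfolding S_def using r by (intro cball_subset_ball_iff[THEN iffD2]) auto
    show "g holomorphic_on interior (cball c (5*r/4))"
    proof -
      have "ball c (5*r/4) \<subseteq> S" using sub ball_subset_cball[of c "5*r/4"] by blast
      then show ?thesis using holomorphic_on_subset[OF gh] by simp
    qed
    show "continuous_on (closure (cball c (5*r/4))) g"
      using holomorphic_on_imp_continuous_on[OF gh] sub by (auto intro: continuous_on_subset)
    show "bounded (cball c (5*r/4))" by simp
    show "z \<in> cball c (5*r/4)" by (rule z)
    fix w assume w: "w \<in> frontier (cball c (5*r/4))"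
    then have wn: "cmod (w - c) = 5*r/4" using r by (simp add: frontier_cball dist_norm norm_minus_commute)
    have "w \<in> S" using wn r unfolding S_def by (simp add: dist_norm norm_minus_commute)
    then have "h w = g w * blaschke c (5*r/4) a w" by (rule eq)
    then have "cmod (h w) = cmod (g w)" using bl_sphere[OF r a wn] by (simp add: norm_mult)
    moreover have "cmod (h w) \<le> 1" using wn by (intro bd) (simp add: dist_norm norm_minus_commute)
    ultimately show "cmod (g w) \<le> 1" by simp
  qed
  show ?thesis by (rule that[OF gh[unfolded S_def] gb eq[unfolded S_def]])
qed


definition fact_ok :: "real \<Rightarrow> complex \<Rightarrow> nat \<Rightarrow> (complex \<Rightarrow> complex) \<Rightarrow> bool" where
  "fact_ok r c k h \<longleftrightarrow> (\<exists>m as g. m \<le> k \<and> (\<forall>i<m. cmod (as i - c) \<le> r) \<and> g holomorphic_on ball c (3*r/2)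
      \<and> (\<forall>z\<in>ball c r. g z \<noteq> 0) \<and> (\<forall>z\<in>cball c (5*r/4). cmod (g z) \<le> 1) \<and> cmod (g c) \<ge> cmod (h c)
      \<and> (\<forall>z\<in>ball c (3*r/2). h z = g z * (\<Prod>i<m. blaschke c (5*r/4) (as i) z)))"

lemma bl_factor:
  fixes k :: nat
  assumes r: "r > 0"
  shows "\<forall>h. h holomorphic_on ball c (3*r/2) \<longrightarrow> (\<forall>z\<in>cball c (5*r/4). cmod (h z) \<le> 1) \<longrightarrow>
           cmod (h c) \<ge> (4/5)^k \<longrightarrow> fact_ok r c k h"
proof (induction k)
  have step: "fact_ok r c k h \<or> (\<exists>a g1. cmod (a - c) \<le> r \<and> g1 holomorphic_on ball c (3*r/2)
      \<and> (\<forall>z\<in>cball c (5*r/4). cmod (g1 z) \<le> 1) \<and> cmod (h c) \<le> 4/5 * cmod (g1 c) \<and> cmod (g1 c) \<le> 1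
      \<and> (\<forall>z\<in>ball c (3*r/2). h z = g1 z * blaschke c (5*r/4) a z))"
    if hol: "h holomorphic_on ball c (3*r/2)" and bd: "\<forall>z\<in>cball c (5*r/4). cmod (h z) \<le> 1" for h k
  proof (cases "\<forall>z\<in>ball c r. h z \<noteq> 0")
    case True
    have "fact_ok r c k h" unfolding fact_ok_def
      by (rule exI[of _ 0], rule exI[of _ "\<lambda>_. c"], rule exI[of _ h]) (use True hol bd in auto)
    then show ?thesis by simp
  next
    case False
    then obtain a where a: "a \<in> ball c r" "h a = 0" by auto
    have a': "cmod (a - c) \<le> r" using a by (simp add: dist_norm norm_minus_commute)
    obtain g1 where g1: "g1 holomorphic_on ball c (3*r/2)" "\<And>z. z \<in> cball c (5*r/4) \<Longrightarrow> cmod (g1 z) \<le> 1"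
      "\<And>z. z \<in> ball c (3*r/2) \<Longrightarrow> h z = g1 z * blaschke c (5*r/4) a z"
      using bl_divide[OF r hol _ a' a(2)] bd by metis
    have "h c = g1 c * blaschke c (5*r/4) a c" using g1(3)[of c] r by simp
    then have "cmod (h c) = cmod (g1 c) * cmod (blaschke c (5*r/4) a c)" by (simp add: norm_mult)
    also have "\<dots> \<le> cmod (g1 c) * (4/5)" by (intro mult_left_mono bl_center[OF r a']) auto
    finally have "cmod (h c) \<le> 4/5 * cmod (g1 c)" by simp
    moreover have "cmod (g1 c) \<le> 1" using g1(2)[of c] r by simp
    ultimately show ?thesis using a' g1 by blast
  qed
  {
    case 0
    show ?case
    proof (intro allI impI)
      fix h assume hol: "h holomorphic_on ball c (3*r/2)" and bd: "\<forall>z\<in>cball c (5*r/4). cmod (h z) \<le> 1"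
        and hc: "(4/5)^0 \<le> cmod (h c)"
      show "fact_ok r c 0 h" using step[OF hol bd, of 0] hc by auto
    qed
  next
    case (Suc k)
    show ?case
    proof (intro allI impI)
      fix h assume hol: "h holomorphic_on ball c (3*r/2)" and bd: "\<forall>z\<in>cball c (5*r/4). cmod (h z) \<le> 1"
        and hc: "(4/5)^Suc k \<le> cmod (h c)"
      from step[OF hol bd, of "Suc k"] show "fact_ok r c (Suc k) h"
      proof
        assume "\<exists>a g1. cmod (a - c) \<le> r \<and> g1 holomorphic_on ball c (3*r/2)
          \<and> (\<forall>z\<in>cball c (5*r/4). cmod (g1 z) \<le> 1) \<and> cmod (h c) \<le> 4/5 * cmod (g1 c) \<and> cmod (g1 c) \<le> 1
          \<and> (\<forall>z\<in>ball c (3*r/2). h z = g1 z * blaschke c (5*r/4) a z)"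
        then obtain a g1 where a: "cmod (a - c) \<le> r" and g1: "g1 holomorphic_on ball c (3*r/2)"
          "\<forall>z\<in>cball c (5*r/4). cmod (g1 z) \<le> 1" "cmod (h c) \<le> 4/5 * cmod (g1 c)"
          "\<forall>z\<in>ball c (3*r/2). h z = g1 z * blaschke c (5*r/4) a z" by blast
        have "(4/5)^k \<le> cmod (g1 c)" using hc g1(3) by simp
        then have "fact_ok r c k g1" using Suc.IH g1(1,2) by blast
        then obtain m as g where m: "m \<le> k" "\<forall>i<m. cmod (as i - c) \<le> r" "g holomorphic_on ball c (3*r/2)"
          "\<forall>z\<in>ball c r. g z \<noteq> 0" "\<forall>z\<in>cball c (5*r/4). cmod (g z) \<le> 1" "cmod (g c) \<ge> cmod (g1 c)"
          "\<forall>z\<in>ball c (3*r/2). g1 z = g z * (\<Prod>i<m. blaschke c (5*r/4) (as i) z)"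
          unfolding fact_ok_def by blast
        define as' where "as' = as(m := a)"
        have pr: "(\<Prod>i<Suc m. blaschke c (5*r/4) (as' i) z) = (\<Prod>i<m. blaschke c (5*r/4) (as i) z) * blaschke c (5*r/4) a z" for z
          unfolding as'_def by (simp add: prod.lessThan_Suc)
        have "cmod (h c) \<le> cmod (g1 c)" using g1(3) norm_ge_zero[of "g1 c"] by linarith
        show "fact_ok r c (Suc k) h" unfolding fact_ok_def
          apply (rule exI[of _ "Suc m"], rule exI[of _ as'], rule exI[of _ g])
          using m a g1 pr \<open>cmod (h c) \<le> cmod (g1 c)\<close> by (auto simp: as'_def less_Suc_eq)
      qed simp
    qed
  }
qed



lemma rhp_lt:
  fixes x A :: complex
  assumes "Re x > 0" "Re A > 0"
  shows "cmod (x - A) < cmod (x + cnj A)"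
proof -
  have "Re x * Re A > 0" using assms by simp
  moreover have "(cmod (x - A))^2 = (Re x - Re A)^2 + (Im x - Im A)^2" by (simp add: cmod_power2)
  moreover have "(cmod (x + cnj A))^2 = (Re x + Re A)^2 + (Im x - Im A)^2" by (simp add: cmod_power2)
  ultimately have "(cmod (x - A))^2 < (cmod (x + cnj A))^2"
    by (simp add: power2_diff power2_sum algebra_simps)
  then show ?thesis by (rule power2_less_imp_less) simp
qed

lemma harn_alg:
  fixes x A :: complex
  assumes "Re A > 0" and le: "cmod (x - A) \<le> 1/2 * cmod (x + cnj A)"
  shows "Re x \<le> 3 * Re A"
proof (rule ccontr)
  assume "\<not> ?thesis"
  then have h: "Re x - Re A > (Re x + Re A)/2" "(Re x + Re A)/2 \<ge> 0" using assms(1) by auto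
  have c1: "(cmod (x - A))^2 \<le> (1/2 * cmod (x + cnj A))^2" using le by (intro power_mono) auto
  have c2: "(cmod (x - A))^2 = (Re x - Re A)^2 + (Im x - Im A)^2" by (simp add: cmod_power2)
  have c3: "(cmod (x + cnj A))^2 = (Re x + Re A)^2 + (Im x - Im A)^2" by (simp add: cmod_power2)
  have c4: "(1/2 * cmod (x + cnj A))^2 = 1/4 * (cmod (x+cnj A))^2" by (simp add: power2_eq_square)
  have "(Re x - Re A)^2 + (Im x - Im A)^2 \<le> 1/4 * ((Re x + Re A)^2 + (Im x - Im A)^2)"
    using c1 unfolding c2 c4 c3 .
  moreover have "(Im x - Im A)^2 \<ge> 0" by simp
  moreover have "((Re x + Re A)/2)^2 < (Re x - Re A)^2" using h by (intro power_strict_mono) auto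
  ultimately show False by (simp add: power_divide) (use zero_le_power2[of "Im x - Im A"] in linarith)
qed

lemma harnack:
  fixes g :: "complex \<Rightarrow> complex"
  assumes r: "r > 0" and hol: "g holomorphic_on ball c r" and nz: "\<And>z. z \<in> ball c r \<Longrightarrow> g z \<noteq> 0"
    and bd: "\<And>z. z \<in> ball c r \<Longrightarrow> cmod (g z) \<le> 1" and z: "cmod (z - c) \<le> r/2"
  shows "- ln (cmod (g z)) \<le> 3 * (- ln (cmod (g c))) + 2"
proof -
  obtain \<phi> where ph: "\<phi> holomorphic_on ball c r" "\<And>z. z \<in> ball c r \<Longrightarrow> g z = exp (\<phi> z)"
    using contractible_imp_holomorphic_log[OF hol convex_imp_contractible[OF convex_ball] nz] by metis
  have lng: "ln (cmod (g w)) = Re (\<phi> w)" if "w \<in> ball c r" for w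
    using ph(2)[OF that] by (simp add: norm_exp_eq_Re)
  have Rep: "Re (\<phi> w) \<le> 0" if "w \<in> ball c r" for w
  proof -
    have "exp (Re (\<phi> w)) \<le> 1" using bd[OF that] ph(2)[OF that] by (simp add: norm_exp_eq_Re)
    then show ?thesis by simp
  qed
  define \<psi> where "\<psi> = (\<lambda>w. 1 - \<phi> w)"
  have Rpsi: "Re (\<psi> w) \<ge> 1" if "w \<in> ball c r" for w using Rep[OF that] by (simp add: \<psi>_def)
  define A where "A = \<psi> c"
  have cin: "c \<in> ball c r" using r by simp
  have RA: "Re A > 0" using Rpsi[OF cin] by (simp add: A_def)
  define T where "T = (\<lambda>\<zeta>. (\<psi> (c + of_real r * \<zeta>) - A) / (\<psi> (c + of_real r * \<zeta>) + cnj A))"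
  have inball: "c + of_real r * \<zeta> \<in> ball c r" if "cmod \<zeta> < 1" for \<zeta>
    using that r by (simp add: dist_norm norm_mult)
  have den: "\<psi> (c + of_real r * \<zeta>) + cnj A \<noteq> 0" if "cmod \<zeta> < 1" for \<zeta>
  proof
    assume "\<psi> (c + of_real r * \<zeta>) + cnj A = 0"
    then have "Re (\<psi> (c + of_real r * \<zeta>) + cnj A) = 0" by simp
    then show False using Rpsi[OF inball[OF that]] RA by simp
  qed
  have Thol: "T holomorphic_on ball 0 1"
  proof -
    have "(\<lambda>\<zeta>. c + of_real r * \<zeta>) ` ball 0 1 \<subseteq> ball c r" using inball by auto
    then have "(\<lambda>\<zeta>. \<psi> (c + of_real r * \<zeta>)) holomorphic_on ball 0 1"
      unfolding \<psi>_def by (intro holomorphic_intros holomorphic_on_compose_gen[OF _ ph(1), unfolded o_def]) auto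
    then show ?thesis unfolding T_def using den by (intro holomorphic_intros) auto
  qed
  have T0: "T 0 = 0" by (simp add: T_def A_def)
  have Tlt: "cmod (T \<zeta>) < 1" if "cmod \<zeta> < 1" for \<zeta>
  proof -
    have "cmod (\<psi> (c + of_real r * \<zeta>) - A) < cmod (\<psi> (c + of_real r * \<zeta>) + cnj A)"
      by (rule rhp_lt) (use Rpsi[OF inball[OF that]] RA in auto)
    then show ?thesis unfolding T_def using den[OF that] by (simp add: norm_divide divide_less_eq)
  qed
  define \<zeta> where "\<zeta> = (z - c) / of_real r"
  have zn: "cmod \<zeta> \<le> 1/2" unfolding \<zeta>_def using z r by (simp add: norm_divide divide_le_eq)
  have zeq: "c + of_real r * \<zeta> = z" unfolding \<zeta>_def using r by simp
  have "cmod (T \<zeta>) \<le> cmod \<zeta>" by (rule Schwarz_Lemma(1)[OF Thol T0 Tlt]) (use zn in auto)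
  then have "cmod (T \<zeta>) \<le> 1/2" using zn by linarith
  then have "cmod (\<psi> z - A) \<le> 1/2 * cmod (\<psi> z + cnj A)"
    using den[of \<zeta>] zn unfolding T_def zeq by (simp add: norm_divide divide_le_eq)
  then have "Re (\<psi> z) \<le> 3 * Re A" by (rule harn_alg[OF RA])
  moreover have zin: "z \<in> ball c r" using z r by (simp add: dist_norm norm_minus_commute)
  ultimately show ?thesis using lng[OF zin] lng[OF cin] by (simp add: \<psi>_def A_def)
qed



lemma sq_sum2: "(x + y)^2 \<le> 2 * x^2 + 2 * (y::real)^2"
  using power2_sum[of x y] power2_diff[of x y] zero_le_power2[of "x - y"] by linarith

lemma core_pointwise:
  fixes h :: "complex \<Rightarrow> complex"
  assumes r: "r > 0" and hol: "h holomorphic_on ball c (3*r/2)"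
    and bd: "\<And>z. z \<in> ball c (3*r/2) \<Longrightarrow> cmod (h z) \<le> 1"
    and hc: "cmod (h c) \<ge> (4/5)^k" and L: "- ln (cmod (h c)) \<le> L"
  obtains m as where "m \<le> k" "\<And>i. i < m \<Longrightarrow> cmod (as i - c) \<le> r"
    "\<And>z. z \<in> ball c (r/2) \<Longrightarrow> (ln (cmod (h z)))^2 \<le> 2 * (3*L+2)^2 + 4 * real m^2
        + (\<Sum>i<m. 4 * real m * (ln (cmod (z - as i) / r))^2)"
proof -
  have bd': "\<forall>z\<in>cball c (5*r/4). cmod (h z) \<le> 1"
    using bd r by (auto simp: dist_norm)
  have "fact_ok r c k h" using bl_factor[OF r] hol bd' hc by blast
  then obtain m as g where m: "m \<le> k" "\<forall>i<m. cmod (as i - c) \<le> r" "g holomorphic_on ball c (3*r/2)"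
    "\<forall>z\<in>ball c r. g z \<noteq> 0" "\<forall>z\<in>cball c (5*r/4). cmod (g z) \<le> 1" "cmod (g c) \<ge> cmod (h c)"
    "\<forall>z\<in>ball c (3*r/2). h z = g z * (\<Prod>i<m. blaschke c (5*r/4) (as i) z)"
    unfolding fact_ok_def by blast
  have hcpos: "cmod (h c) > 0" using hc by (smt (verit) zero_less_power zero_less_divide_iff)
  have Lg: "- ln (cmod (g c)) \<le> L" using m(6) hcpos L by (smt (verit) ln_le_cancel_iff)
  have main: "(ln (cmod (h z)))^2 \<le> 2 * (3*L+2)^2 + 4 * real m^2
        + (\<Sum>i<m. 4 * real m * (ln (cmod (z - as i) / r))^2)" if z: "z \<in> ball c (r/2)" for z
  proof (cases "h z = 0")
    case True
    have "0 \<le> (\<Sum>i<m. 4 * real m * (ln (cmod (z - as i) / r))^2)" by (intro sum_nonneg) auto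
    then show ?thesis using True by simp
  next
    case False
    have z3: "z \<in> ball c (3*r/2)" using z r by auto
    have zr: "z \<in> ball c r" using z r by auto
    have hz: "h z = g z * (\<Prod>i<m. blaschke c (5*r/4) (as i) z)" using m(7) z3 by blast
    have gz: "g z \<noteq> 0" using hz False by auto
    have bz: "blaschke c (5*r/4) (as i) z \<noteq> 0" if "i < m" for i
      using hz False that by auto
    have lnh: "ln (cmod (h z)) = ln (cmod (g z)) + (\<Sum>i<m. ln (cmod (blaschke c (5*r/4) (as i) z)))"
    proof -
      have pn: "cmod (\<Prod>i<m. blaschke c (5*r/4) (as i) z) = (\<Prod>i<m. cmod (blaschke c (5*r/4) (as i) z))"
        by (simp add: prod_norm)
      have "ln (\<Prod>i<m. cmod (blaschke c (5*r/4) (as i) z)) = (\<Sum>i<m. ln (cmod (blaschke c (5*r/4) (as i) z)))"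
        by (rule ln_prod) (use bz in auto)
      moreover have "(\<Prod>i<m. cmod (blaschke c (5*r/4) (as i) z)) > 0" by (rule prod_pos) (use bz in auto)
      ultimately show ?thesis unfolding hz norm_mult pn using gz bz by (subst ln_mult) auto
    qed
    have g1: "cmod (g w) \<le> 1" if "w \<in> ball c r" for w using m(5) that r by auto
    have har: "- ln (cmod (g z)) \<le> 3 * (- ln (cmod (g c))) + 2"
      by (rule harnack[OF r _ _ g1]) (use m(3,4) r z in \<open>auto intro: holomorphic_on_subset simp: dist_norm norm_minus_commute\<close>)
    have "- ln (cmod (g z)) \<ge> 0" using g1[OF zr] gz by simp
    then have G: "(ln (cmod (g z)))^2 \<le> (3*L+2)^2" using har Lg
      by (intro power2_le_iff_abs_le[THEN iffD2]) auto
    have Bi: "(ln (cmod (blaschke c (5*r/4) (as i) z)))^2 \<le> 2 * (ln (cmod (z - as i) / r))^2 + 2" if "i < m" for i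
      by (rule bl_log_bound[OF r]) (use m(2) that z in \<open>auto simp: dist_norm norm_minus_commute\<close>)
    have A: "(ln (cmod (h z)))^2 \<le> 2 * (ln (cmod (g z)))^2 + 2 * (\<Sum>i<m. ln (cmod (blaschke c (5*r/4) (as i) z)))^2"
      unfolding lnh by (rule sq_sum2)
    have "(\<Sum>i<m. ln (cmod (blaschke c (5*r/4) (as i) z)))^2 \<le> (\<Sum>i<m. (ln (cmod (blaschke c (5*r/4) (as i) z)))^2) * real m"
      using sum_squared_le_sum_of_squares[of "\<lambda>i. ln (cmod (blaschke c (5*r/4) (as i) z))" "{..<m}"] by simp
    also have "\<dots> \<le> (\<Sum>i<m. 2 * (ln (cmod (z - as i) / r))^2 + 2) * real m"
      by (intro mult_right_mono sum_mono Bi) auto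
    also have "\<dots> = (\<Sum>i<m. 2 * real m * (ln (cmod (z - as i) / r))^2) + 2 * real m^2"
      by (simp add: sum.distrib sum_distrib_right sum_distrib_left power2_eq_square algebra_simps)
    finally have S: "(\<Sum>i<m. ln (cmod (blaschke c (5*r/4) (as i) z)))^2 \<le> (\<Sum>i<m. 2 * real m * (ln (cmod (z - as i) / r))^2) + 2 * real m^2" .
    have "(\<Sum>i<m. 4 * real m * (ln (cmod (z - as i) / r))^2) = 2 * (\<Sum>i<m. 2 * real m * (ln (cmod (z - as i) / r))^2)"
      by (simp add: sum_distrib_left mult.assoc)
    then show ?thesis using A S G by linarith
  qed
  show ?thesis by (rule that[OF m(1) _ main]) (use m(2) in auto)
qed


lemma core_int:
  fixes h :: "complex \<Rightarrow> complex"
  assumes r: "r > 0" and hol: "h holomorphic_on ball c (3*r/2)"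
    and bd: "\<And>z. z \<in> ball c (3*r/2) \<Longrightarrow> cmod (h z) \<le> 1"
    and hc: "cmod (h c) \<ge> (4/5)^k" and L: "- ln (cmod (h c)) \<le> L"
  shows "(\<integral>\<^sup>+ z \<in> ball c (r/2). ennreal ((ln (cmod (h z)))\<^sup>2) \<partial>lborel)
           \<le> ennreal (pi * ((3*L+2)^2 + 33 * real k^2) * r^2)"
proof -
  obtain m as where m: "m \<le> k" "\<And>i. i < m \<Longrightarrow> cmod (as i - c) \<le> r"
    and pw: "\<And>z. z \<in> ball c (r/2) \<Longrightarrow> (ln (cmod (h z)))^2 \<le> 2 * (3*L+2)^2 + 4 * real m^2
        + (\<Sum>i<m. 4 * real m * (ln (cmod (z - as i) / r))^2)"
    using core_pointwise[OF r hol bd hc L] by metis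
  define C1 where "C1 = 2 * (3*L+2)^2 + 4 * real m^2"
  have C1: "C1 \<ge> 0" unfolding C1_def by simp
  define f where "f = (\<lambda>i z. ennreal ((ln (cmod (z - as i) / r))\<^sup>2) * indicator (ball (as i) (2*r)) z)"
  have "(\<integral>\<^sup>+ z \<in> ball c (r/2). ennreal ((ln (cmod (h z)))\<^sup>2) \<partial>lborel)
     \<le> (\<integral>\<^sup>+ z. ennreal C1 * indicator (ball c (r/2)) z + (\<Sum>i<m. ennreal (4 * real m) * f i z) \<partial>lborel)"
  proof (intro nn_integral_mono)
    fix z
    show "ennreal ((ln (cmod (h z)))\<^sup>2) * indicator (ball c (r/2)) z
       \<le> ennreal C1 * indicator (ball c (r/2)) z + (\<Sum>i<m. ennreal (4 * real m) * f i z)"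
    proof (cases "z \<in> ball c (r/2)")
      case False then show ?thesis by simp
    next
      case True
      have fi: "f i z = ennreal ((ln (cmod (z - as i) / r))\<^sup>2)" if "i < m" for i
      proof -
        have "cmod (z - as i) \<le> cmod (z - c) + cmod (as i - c)"
          using norm_triangle_ineq4[of "z - c" "as i - c"] by simp
        also have "\<dots> < 2*r" using True m(2)[OF that] r by (simp add: dist_norm norm_minus_commute)
        finally have "z \<in> ball (as i) (2*r)" by (simp add: dist_norm norm_minus_commute)
        then show ?thesis unfolding f_def by simp
      qed
      have "ennreal ((ln (cmod (h z)))\<^sup>2) \<le> ennreal (C1 + (\<Sum>i<m. 4 * real m * (ln (cmod (z - as i) / r))^2))"
        using pw[OF True] unfolding C1_def by (intro ennreal_leI) simp
      also have "\<dots> = ennreal C1 + (\<Sum>i<m. ennreal (4 * real m) * ennreal ((ln (cmod (z - as i) / r))^2))"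
      proof -
        have S0: "(\<Sum>i<m. 4 * real m * (ln (cmod (z - as i) / r))^2) \<ge> 0" by (intro sum_nonneg) auto
        have "ennreal (\<Sum>i<m. 4 * real m * (ln (cmod (z - as i) / r))^2) = (\<Sum>i<m. ennreal (4 * real m * (ln (cmod (z - as i) / r))^2))"
          by (rule sum_ennreal[symmetric]) auto
        also have "\<dots> = (\<Sum>i<m. ennreal (4 * real m) * ennreal ((ln (cmod (z - as i) / r))^2))"
          by (intro sum.cong refl ennreal_mult) auto
        finally have E: "ennreal (\<Sum>i<m. 4 * real m * (ln (cmod (z - as i) / r))^2) = (\<Sum>i<m. ennreal (4 * real m) * ennreal ((ln (cmod (z - as i) / r))^2))" .
        show ?thesis unfolding ennreal_plus[OF C1 S0] E ..
      qed
      also have "\<dots> = ennreal C1 + (\<Sum>i<m. ennreal (4 * real m) * f i z)"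
        using fi by simp
      finally show ?thesis using True by simp
    qed
  qed
  also have "\<dots> = (\<integral>\<^sup>+ z. ennreal C1 * indicator (ball c (r/2)) z \<partial>lborel) + (\<integral>\<^sup>+ z. (\<Sum>i<m. ennreal (4 * real m) * f i z) \<partial>lborel)"
    unfolding f_def by (rule nn_integral_add) measurable
  also have "(\<integral>\<^sup>+ z. (\<Sum>i<m. ennreal (4 * real m) * f i z) \<partial>lborel) = (\<Sum>i<m. ennreal (4 * real m) * (\<integral>\<^sup>+ z. f i z \<partial>lborel))"
    unfolding f_def by (subst nn_integral_sum) (auto intro!: sum.cong nn_integral_cmult)
  also have "\<dots> \<le> (\<Sum>i<m. ennreal (4 * real m) * ennreal (8 * pi * r^2))"
    unfolding f_def by (intro sum_mono mult_left_mono log_integral r) auto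
  also have "(\<integral>\<^sup>+ z. ennreal C1 * indicator (ball c (r/2)) z \<partial>lborel) = ennreal C1 * ennreal (pi * (r/2)^2)"
    using r by (subst nn_integral_cmult_indicator) (auto simp: emeasure_ball_complex)
  finally have "(\<integral>\<^sup>+ z \<in> ball c (r/2). ennreal ((ln (cmod (h z)))\<^sup>2) \<partial>lborel)
     \<le> ennreal (C1 * (pi * (r/2)^2) + real m * (4 * real m * (8 * pi * r^2)))"
    using C1 r by (simp add: ennreal_of_nat_eq_real_of_nat ennreal_mult[symmetric] ennreal_plus[symmetric] del: ennreal_plus)
  also have "\<dots> \<le> ennreal (pi * ((3*L+2)^2 + 33 * real k^2) * r^2)"
  proof (intro ennreal_leI)
    have mk: "real m^2 \<le> real k^2" using m(1) by (intro power_mono) auto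
    have "C1 * (pi * (r/2)^2) + real m * (4 * real m * (8 * pi * r^2))
        = pi * r^2 * ((3*L+2)^2 / 2 + 33 * real m^2)"
      unfolding C1_def by (simp add: power2_eq_square algebra_simps)
    also have "\<dots> \<le> pi * r^2 * ((3*L+2)^2 + 33 * real k^2)"
    proof -
      have "(3*L+2)^2 / 2 + 33 * real m^2 \<le> (3*L+2)^2 + 33 * real k^2"
        using mk zero_le_power2[of "3*L+2"] by linarith
      then show ?thesis by (rule mult_left_mono) simp
    qed
    finally show "C1 * (pi * (r/2)^2) + real m * (4 * real m * (8 * pi * r^2)) \<le> pi * ((3*L+2)^2 + 33 * real k^2) * r^2"
      by (simp add: algebra_simps)
  qed
  finally show ?thesis .
qed



lemma ln54: "ln (5/4::real) \<ge> 1/5"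
proof -
  have "ln (4/5::real) \<le> 4/5 - 1" by (rule ln_le_minus_one) simp
  moreover have "ln (4/5::real) = - ln (5/4)" by (simp add: ln_div)
  ultimately show ?thesis by simp
qed

lemma pow45:
  fixes L :: real assumes L: "L \<ge> 0"
  shows "(4/5::real) ^ (nat \<lceil>L / ln (5/4)\<rceil>) \<le> exp (- L)"
    and "real (nat \<lceil>L / ln (5/4)\<rceil>) \<le> 5 * L + 1"
proof -
  define k where "k = nat \<lceil>L / ln (5/4)\<rceil>"
  have l: "ln (5/4::real) > 0" using ln54 by linarith
  have "real k \<ge> L / ln (5/4)" unfolding k_def by linarith
  then have kL: "real k * ln (5/4) \<ge> L" using l by (simp add: field_simps)
  have "(4/5::real)^k = exp (real k * ln (4/5))" by (simp only: exp_of_nat_mult) simp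
  also have "\<dots> = exp (- (real k * ln (5/4)))" by (simp add: ln_div algebra_simps)
  also have "\<dots> \<le> exp (- L)" using kL by simp
  finally show "(4/5::real) ^ k \<le> exp (- L)" .
  have "L * 1 \<le> L * (5 * ln (5/4))" using L ln54 by (intro mult_left_mono) auto
  then have "L / ln (5/4) \<le> 5 * L" using l by (simp add: field_simps)
  moreover have "L / ln (5/4) \<ge> 0" using L l by simp
  moreover have "of_int \<lceil>L / ln (5/4)\<rceil> \<le> L / ln (5/4) + 1" by (rule of_int_ceiling_le_add_one)
  moreover have "real k = of_int \<lceil>L / ln (5/4)\<rceil>" unfolding k_def using \<open>L / ln (5/4) \<ge> 0\<close> by simp
  ultimately show "real k \<le> 5 * L + 1" by linarith
qed


lemma ennreal_aux:
  fixes x y p q :: real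
  assumes "0 \<le> x" "0 \<le> y" "0 \<le> p" "0 \<le> q"
  shows "ennreal x * ennreal y + ennreal p * ennreal q = ennreal (x*y + p*q)"
proof -
  have "ennreal x * ennreal y = ennreal (x*y)" using assms by (simp add: ennreal_mult)
  moreover have "ennreal p * ennreal q = ennreal (p*q)" using assms by (simp add: ennreal_mult)
  ultimately show ?thesis using assms by (simp add: ennreal_plus[symmetric] del: ennreal_plus)
qed

definition KC :: "real \<Rightarrow> real" where
  "KC C0 = 2 * pi * ((8 + 3 * ln C0)^2 + 33 * (11 + 5 * ln C0)^2) + pi * (1 + 2 * ln C0)^2"

lemma main_bound:
  fixes c2 C0 \<epsilon> a w :: real and n :: nat and P :: "complex \<Rightarrow> complex" and W :: "complex \<Rightarrow> real"
  assumes c2: "0 < c2" and C0: "C0 \<ge> 1" and n: "n \<ge> 1"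
    and hol: "P holomorphic_on UNIV" and Wpos: "\<forall>z. W z > 0"
    and ratio: "\<forall>v\<in>{-1+\<epsilon>..1-\<epsilon>}. \<forall>z. cmod (z - complex_of_real v) \<le> 2 / real n \<longrightarrow>
          1 / C0 \<le> W (complex_of_real a * z) / W (complex_of_real a * complex_of_real v) \<and>
          W (complex_of_real a * z) / W (complex_of_real a * complex_of_real v) \<le> C0"
    and wI: "w \<in> {-1+\<epsilon>..1-\<epsilon>}"
    and low: "cmod (P (complex_of_real w)) * W (complex_of_real a * complex_of_real w) \<ge> exp (- (real n powr c2))"
    and up: "\<forall>z\<in>ball (complex_of_real w) (3 / (2 * real n)).
          cmod (P z) * W (complex_of_real a * z) \<le> exp (real n powr c2)"
  shows "(\<integral>\<^sup>+ z \<in> ball (complex_of_real w) (1 / (2 * real n)).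
          ennreal ((ln (cmod (P z) * W (complex_of_real a * z)))\<^sup>2) \<partial>lborel)
        \<le> ennreal (KC C0 * real n powr (-2 + 6 * c2))"
proof -
  define X where "X = real n powr c2"
  have npos: "real n > 0" using n by simp
  have X1: "X \<ge> 1" unfolding X_def using n c2 by (simp add: ge_one_powr_ge_zero)
  define l0 where "l0 = ln C0"
  have l0: "l0 \<ge> 0" unfolding l0_def using C0 by simp
  have C0pos: "C0 > 0" using C0 by simp
  define r where "r = 1 / real n"
  have r: "r > 0" unfolding r_def using npos by simp
  define cw where "cw = complex_of_real w"
  define Wc where "Wc = W (complex_of_real a * cw)"
  have Wc: "Wc > 0" unfolding Wc_def using Wpos by simp
  have rat: "1 / C0 \<le> W (complex_of_real a * z) / Wc \<and> W (complex_of_real a * z) / Wc \<le> C0"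
    if "cmod (z - cw) \<le> 2 / real n" for z
    using ratio wI that unfolding Wc_def cw_def by blast
  define h where "h = (\<lambda>z. P z * complex_of_real (Wc / (C0 * exp X)))"
  have hol_h: "h holomorphic_on UNIV" unfolding h_def by (intro holomorphic_intros hol)
  have normh: "cmod (h z) = cmod (P z) * Wc / (C0 * exp X)" for z
    unfolding h_def norm_mult norm_of_real using Wc C0pos by simp
  have bd_h: "cmod (h z) \<le> 1" if z: "z \<in> ball cw (3*r/2)" for z
  proof -
    have "cmod (z - cw) \<le> 2 / real n" using z npos unfolding r_def
      by (simp add: dist_norm norm_minus_commute field_simps)
    then have "1 / C0 \<le> W (complex_of_real a * z) / Wc" using rat by blast
    then have "Wc \<le> C0 * W (complex_of_real a * z)" using Wc C0pos by (simp add: field_simps)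
    then have "cmod (P z) * Wc \<le> cmod (P z) * (C0 * W (complex_of_real a * z))" by (intro mult_left_mono) auto
    also have "\<dots> = C0 * (cmod (P z) * W (complex_of_real a * z))" by simp
    also have "\<dots> \<le> C0 * exp X"
      using up z C0pos unfolding X_def r_def cw_def by (intro mult_left_mono) (auto simp: field_simps)
    finally show ?thesis unfolding normh using C0pos by (simp add: field_simps)
  qed
  define L where "L = 2 * X + l0"
  have L0: "L \<ge> 0" unfolding L_def using X1 l0 by simp
  have hc: "cmod (h cw) \<ge> exp (- L)"
  proof -
    have "exp (- L) = exp (- X) / (C0 * exp X)"
      unfolding L_def l0_def using C0pos by (simp add: exp_diff exp_add exp_minus field_simps mult_exp_exp)
    also have "\<dots> \<le> cmod (P cw) * Wc / (C0 * exp X)"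
      using low C0pos unfolding X_def Wc_def cw_def by (intro divide_right_mono) auto
    finally show ?thesis unfolding normh .
  qed
  have hcL: "- ln (cmod (h cw)) \<le> L"
  proof -
    have "ln (exp (- L)) \<le> ln (cmod (h cw))" using hc by (subst ln_le_cancel_iff) auto
    then show ?thesis by simp
  qed
  define k where "k = nat \<lceil>L / ln (5/4)\<rceil>"
  have k1: "(4/5)^k \<le> cmod (h cw)" using pow45(1)[OF L0] hc unfolding k_def by linarith
  have k2: "real k \<le> 5 * L + 1" using pow45(2)[OF L0] unfolding k_def .
  have CI: "(\<integral>\<^sup>+ z \<in> ball cw (r/2). ennreal ((ln (cmod (h z)))\<^sup>2) \<partial>lborel)
           \<le> ennreal (pi * ((3*L+2)^2 + 33 * real k^2) * r^2)"
    by (rule core_int[where h=h and c=cw and r=r and k=k and L=L]) (use r bd_h k1 hcL hol_h in \<open>auto intro: holomorphic_on_subset\<close>)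
  define B where "B = X + 2 * l0"
  have pw: "(ln (cmod (P z) * W (complex_of_real a * z)))^2 \<le> 2 * (ln (cmod (h z)))^2 + 2 * B^2"
    if z: "z \<in> ball cw (r/2)" for z
  proof (cases "P z = 0")
    case True then show ?thesis by simp
  next
    case False
    have Wz: "W (complex_of_real a * z) > 0" using Wpos by simp
    have "cmod (z - cw) \<le> 2 / real n" using z npos unfolding r_def
      by (simp add: dist_norm norm_minus_commute field_simps)
    then have R: "1 / C0 \<le> W (complex_of_real a * z) / Wc" "W (complex_of_real a * z) / Wc \<le> C0" using rat by auto
    have q: "W (complex_of_real a * z) / Wc > 0" using Wz Wc by simp
    have "ln (W (complex_of_real a * z) / Wc) \<le> l0" unfolding l0_def using R(2) q by simp
    moreover have "ln (1 / C0) \<le> ln (W (complex_of_real a * z) / Wc)" using R(1) q C0pos by simp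
    moreover have "ln (1 / C0) = - l0" unfolding l0_def using C0pos by (simp add: ln_div)
    moreover have "ln (W (complex_of_real a * z) / Wc) = ln (W (complex_of_real a * z)) - ln Wc" using Wz Wc by (simp add: ln_div)
    ultimately have D: "\<bar>ln (W (complex_of_real a * z)) - ln Wc\<bar> \<le> l0" by linarith
    have Pz: "cmod (P z) > 0" using False by simp
    have e1: "ln (cmod (P z) * W (complex_of_real a * z)) = ln (cmod (P z)) + ln (W (complex_of_real a * z))"
      using Pz Wz by (simp add: ln_mult)
    have e2: "ln (cmod (h z)) = ln (cmod (P z)) + ln Wc - l0 - X"
      unfolding normh l0_def using Pz Wc C0pos by (simp add: ln_mult ln_div)
    define dd where "dd = ln (W (complex_of_real a * z)) - ln Wc + l0 + X"
    have ee: "ln (cmod (P z) * W (complex_of_real a * z)) = ln (cmod (h z)) + dd"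
      unfolding e1 e2 dd_def by simp
    have dB: "\<bar>dd\<bar> \<le> B" unfolding dd_def B_def using D l0 X1 by linarith
    have "\<bar>dd\<bar>^2 \<le> B^2" by (rule power_mono[OF dB]) simp
    then have "dd^2 \<le> B^2" by simp
    then show ?thesis unfolding ee using sq_sum2[of "ln (cmod (h z))" dd] by linarith
  qed
  have meas_h: "h \<in> borel_measurable borel"
    by (rule borel_measurable_continuous_onI) (use hol_h holomorphic_on_imp_continuous_on in blast)
  have "(\<integral>\<^sup>+ z \<in> ball cw (r/2). ennreal ((ln (cmod (P z) * W (complex_of_real a * z)))\<^sup>2) \<partial>lborel)
      \<le> (\<integral>\<^sup>+ z. ennreal 2 * (ennreal ((ln (cmod (h z)))\<^sup>2) * indicator (ball cw (r/2)) z)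
               + ennreal (2 * B^2) * indicator (ball cw (r/2)) z \<partial>lborel)"
  proof (intro nn_integral_mono)
    fix z
    show "ennreal ((ln (cmod (P z) * W (complex_of_real a * z)))\<^sup>2) * indicator (ball cw (r/2)) z
       \<le> ennreal 2 * (ennreal ((ln (cmod (h z)))\<^sup>2) * indicator (ball cw (r/2)) z)
               + ennreal (2 * B^2) * indicator (ball cw (r/2)) z"
    proof (cases "z \<in> ball cw (r/2)")
      case True
      have "ennreal ((ln (cmod (P z) * W (complex_of_real a * z)))\<^sup>2) \<le> ennreal (2 * (ln (cmod (h z)))^2 + 2 * B^2)"
        using pw[OF True] by (intro ennreal_leI)
      also have "\<dots> = ennreal (2 * (ln (cmod (h z)))^2) + ennreal (2 * B^2)"
        by (rule ennreal_plus) auto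
      also have "ennreal (2 * (ln (cmod (h z)))^2) = ennreal 2 * ennreal ((ln (cmod (h z)))^2)"
        by (rule ennreal_mult) auto
      finally show ?thesis using True by simp
    qed simp
  qed
  also have "\<dots> = ennreal 2 * (\<integral>\<^sup>+ z. ennreal ((ln (cmod (h z)))\<^sup>2) * indicator (ball cw (r/2)) z \<partial>lborel)
        + ennreal (2 * B^2) * emeasure lborel (ball cw (r/2))"
    using meas_h by (subst nn_integral_add) (auto simp: nn_integral_cmult nn_integral_cmult_indicator)
  also have "\<dots> \<le> ennreal 2 * ennreal (pi * ((3*L+2)^2 + 33 * real k^2) * r^2) + ennreal (2 * B^2) * ennreal (pi * (r/2)^2)"
    using CI r by (intro add_mono mult_left_mono) (auto simp: emeasure_ball_complex)
  also have "\<dots> = ennreal (2 * (pi * ((3*L+2)^2 + 33 * real k^2) * r^2) + 2 * B^2 * (pi * (r/2)^2))"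
    by (rule ennreal_aux) auto
  also have "\<dots> \<le> ennreal (KC C0 * real n powr (-2 + 6 * c2))"
  proof (intro ennreal_leI)
    have lX: "l0 \<le> l0 * X" using mult_left_mono[OF X1 l0] by simp
    have "3*L+2 \<le> 8*X + 3*(l0*X)" unfolding L_def using X1 lX by (simp add: algebra_simps)
    then have a1: "3*L+2 \<le> (8 + 3*l0) * X" by (simp add: algebra_simps)
    have "real k \<le> 11*X + 5*(l0*X)" using k2 unfolding L_def using X1 lX by (simp add: algebra_simps)
    then have a2: "real k \<le> (11 + 5*l0) * X" by (simp add: algebra_simps)
    have "B \<le> X + 2*(l0*X)" unfolding B_def using X1 lX by (simp add: algebra_simps)
    then have a3: "B \<le> (1 + 2*l0) * X" by (simp add: algebra_simps)
    have b1: "(3*L+2)^2 \<le> (8 + 3*l0)^2 * X^2"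
      using power_mono[OF a1, of 2] L0 by (simp add: power_mult_distrib)
    have b2: "real k^2 \<le> (11 + 5*l0)^2 * X^2"
      using power_mono[OF a2, of 2] by (simp add: power_mult_distrib)
    have b3: "B^2 \<le> (1 + 2*l0)^2 * X^2"
      using power_mono[OF a3, of 2] X1 l0 unfolding B_def by (simp add: power_mult_distrib)
    have "2 * (pi * ((3*L+2)^2 + 33 * real k^2) * r^2) + 2 * B^2 * (pi * (r/2)^2)
        = (2 * pi * ((3*L+2)^2 + 33 * real k^2) + pi * B^2 / 2) * r^2"
      by (simp add: power2_eq_square algebra_simps)
    also have "\<dots> \<le> (2 * pi * ((8 + 3*l0)^2 * X^2 + 33 * ((11 + 5*l0)^2 * X^2)) + pi * ((1 + 2*l0)^2 * X^2)) * r^2"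
    proof (intro mult_right_mono add_mono)
      show "2 * pi * ((3*L+2)^2 + 33 * real k^2) \<le> 2 * pi * ((8 + 3*l0)^2 * X^2 + 33 * ((11 + 5*l0)^2 * X^2))"
        using b1 b2 by (intro mult_left_mono) auto
      show "pi * B^2 / 2 \<le> pi * ((1 + 2*l0)^2 * X^2)"
      proof -
        have "B^2 / 2 \<le> (1 + 2*l0)^2 * X^2" using b3 zero_le_power2[of B] by linarith
        from mult_left_mono[OF this, of pi] show ?thesis by simp
      qed
    qed auto
    also have "\<dots> = KC C0 * X^2 * r^2" unfolding KC_def l0_def by (simp add: algebra_simps)
    also have "\<dots> \<le> KC C0 * real n powr (-2 + 6 * c2)"
    proof -
      have K0: "KC C0 \<ge> 0" unfolding KC_def by simp
      have "X^2 = real n powr (2 * c2)" unfolding X_def using npos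
        by (simp add: powr_realpow[symmetric] powr_powr mult.commute)
      also have "\<dots> \<le> real n powr (6 * c2)" using n c2 by (intro powr_mono) auto
      finally have "X^2 * r^2 \<le> real n powr (6 * c2) * r^2" by (intro mult_right_mono) auto
      also have "\<dots> = real n powr (-2 + 6 * c2)"
      proof -
        have e1: "real n powr (-2 + 6 * c2) = real n powr (-2) * real n powr (6 * c2)" by (rule powr_add)
        have e2: "real n powr (-2) = 1 / (real n)^2" using npos by (simp add: powr_minus_divide powr_numeral)
        show ?thesis unfolding e1 e2 r_def by (simp add: power_divide)
      qed
      finally show ?thesis using K0 by (simp add: mult.assoc mult_left_mono)
    qed
    finally show "2 * (pi * ((3*L+2)^2 + 33 * real k^2) * r^2) + 2 * B^2 * (pi * (r/2)^2) \<le> KC C0 * real n powr (-2 + 6 * c2)" .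
  qed
  finally show ?thesis unfolding cw_def r_def by (simp add: mult.commute)
qed


theorem lemma9p1:
  fixes c\<^sub>2 C\<^sub>0 :: real
  assumes "0 < c\<^sub>2" "c\<^sub>2 < 1" "C\<^sub>0 \<ge> 1"
  shows "\<exists>C>0. \<forall>\<epsilon>::real. 0 < \<epsilon> \<and> \<epsilon> < 1 \<longrightarrow>
    (\<exists>N::nat. \<forall>n\<ge>N. \<forall>(a::real) (P::complex \<Rightarrow> complex) (W::complex \<Rightarrow> real) (w::real).
      a > 0 \<longrightarrow> P holomorphic_on UNIV \<longrightarrow> continuous_on UNIV W \<longrightarrow> (\<forall>z. W z > 0) \<longrightarrow>
      (\<forall>v\<in>{-1+\<epsilon>..1-\<epsilon>}. \<forall>z. cmod (z - complex_of_real v) \<le> 2 / real n \<longrightarrow>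
          1 / C\<^sub>0 \<le> W (complex_of_real a * z) / W (complex_of_real a * complex_of_real v) \<and>
          W (complex_of_real a * z) / W (complex_of_real a * complex_of_real v) \<le> C\<^sub>0) \<longrightarrow>
      w \<in> {-1+\<epsilon>..1-\<epsilon>} \<longrightarrow>
      cmod (P (complex_of_real w)) * W (complex_of_real a * complex_of_real w) \<ge> exp (- (real n powr c\<^sub>2)) \<longrightarrow>
      (\<forall>z\<in>ball (complex_of_real w) (3 / (2 * real n)).
          cmod (P z) * W (complex_of_real a * z) \<le> exp (real n powr c\<^sub>2)) \<longrightarrow>
      (\<integral>\<^sup>+ z \<in> ball (complex_of_real w) (1 / (2 * real n)).
          ennreal ((ln (cmod (P z) * W (complex_of_real a * z)))\<^sup>2) \<partial>lborel)
        \<le> ennreal (C * real n powr (-2 + 6 * c\<^sub>2)))"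
  proof -
  have Kpos: "KC C\<^sub>0 > 0"
  proof -
    have "ln C\<^sub>0 \<ge> 0" using assms(3) by simp
    then have "(1 + 2 * ln C\<^sub>0)^2 > 0" by simp
    then have "pi * (1 + 2 * ln C\<^sub>0)^2 > 0" by simp
    moreover have "2 * pi * ((8 + 3 * ln C\<^sub>0)^2 + 33 * (11 + 5 * ln C\<^sub>0)^2) \<ge> 0" by simp
    ultimately show ?thesis unfolding KC_def by linarith
  qed
  show ?thesis
  proof (rule exI[of _ "KC C\<^sub>0"], intro conjI allI impI)
    show "KC C\<^sub>0 > 0" by (rule Kpos)
    fix \<epsilon> :: real
    assume "0 < \<epsilon> \<and> \<epsilon> < 1"
    show "\<exists>N::nat. \<forall>n\<ge>N. \<forall>(a::real) (P::complex \<Rightarrow> complex) (W::complex \<Rightarrow> real) (w::real).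
      a > 0 \<longrightarrow> P holomorphic_on UNIV \<longrightarrow> continuous_on UNIV W \<longrightarrow> (\<forall>z. W z > 0) \<longrightarrow>
      (\<forall>v\<in>{-1+\<epsilon>..1-\<epsilon>}. \<forall>z. cmod (z - complex_of_real v) \<le> 2 / real n \<longrightarrow>
          1 / C\<^sub>0 \<le> W (complex_of_real a * z) / W (complex_of_real a * complex_of_real v) \<and>
          W (complex_of_real a * z) / W (complex_of_real a * complex_of_real v) \<le> C\<^sub>0) \<longrightarrow>
      w \<in> {-1+\<epsilon>..1-\<epsilon>} \<longrightarrow>
      cmod (P (complex_of_real w)) * W (complex_of_real a * complex_of_real w) \<ge> exp (- (real n powr c\<^sub>2)) \<longrightarrow>
      (\<forall>z\<in>ball (complex_of_real w) (3 / (2 * real n)).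
          cmod (P z) * W (complex_of_real a * z) \<le> exp (real n powr c\<^sub>2)) \<longrightarrow>
      (\<integral>\<^sup>+ z \<in> ball (complex_of_real w) (1 / (2 * real n)).
          ennreal ((ln (cmod (P z) * W (complex_of_real a * z)))\<^sup>2) \<partial>lborel)
        \<le> ennreal (KC C\<^sub>0 * real n powr (-2 + 6 * c\<^sub>2))"
      by (rule exI[of _ 1], intro allI impI, rule main_bound[OF assms(1) assms(3)]) auto
  qed
qed

end
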